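(* Let $(S,\Delta,\mathbb{P})$ be a probability space, $(U,d)$ a separable metric space, $\mathfrak{X}$ the set of $U$-valued random variables on $S$, $\mathcal{I}$ an ideal on $\mathbb{N}$ with $\mathbb{N}\notin\mathcal{I}$, and $\{X_n\}_{n\in\mathbb{N}}$ a sequence in $\mathfrak{X}$ which is $\mathcal{I}$-convergent in probability to $X_*\in\mathfrak{X}$ (i.e. $\{n:\mathbb{P}(d(X_n,X_* )>\varepsilon)>\delta\}\in\mathcal{I}$ for all $\varepsilon,\delta>0$). Then for every $r\geq 0$, $$\bar{\theta}_r(X_* )\subseteq \mathcal{I}^{\mathbb{P}}\text{-}LIM^rX_i\subseteq \bar{B}_r(X_* ),$$ where $\bar{\theta}_r(X_* )=\{Y\in\mathfrak{X}:\mathbb{P}(d(X_*,Y)\geq r)=0\}$ and $\bar{B}_r(X_* )=\{Y\in\mathfrak{X}:\rho(X_*,Y)\leq r\}$.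
   Context: The Ky Fan metric is $\rho(X,Y)=\inf\{\varepsilon>0:\mathbb{P}(d(X,Y)>\varepsilon)\leq\varepsilon\}$. An ideal on $\mathbb{N}$ is a family $\mathcal{I}\subseteq\mathcal{P}(\mathbb{N})$ with $\varnothing\in\mathcal{I}$, closed under finite unions and under subsets. A sequence $\{X_n\}$ in $\mathfrak{X}$ is rough $\mathcal{I}$-convergent in probability to $Y\in\mathfrak{X}$ with degree of roughness $r$ if $\{n\in\mathbb{N}:\mathbb{P}(d(X_n,Y)>r+\varepsilon)>\delta\}\in\mathcal{I}$ for every $\varepsilon,\delta>0$; $\mathcal{I}^{\mathbb{P}}\text{-}LIM^rX_i$ denotes the set of all such $Y$. *)

theory Defs
  imports "HOL-Probability.Probability"
begin

definition ideal_on_nat :: "nat set set \<Rightarrow> bool" where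
  "ideal_on_nat I \<longleftrightarrow> {} \<in> I \<and> (\<forall>A\<in>I. \<forall>B\<in>I. A \<union> B \<in> I) \<and> (\<forall>A\<in>I. \<forall>B. B \<subseteq> A \<longrightarrow> B \<in> I)"

definition rvs :: "'a measure \<Rightarrow> ('a \<Rightarrow> 'b::metric_space) set" where
  "rvs M = borel_measurable M"

definition ky_fan :: "'a measure \<Rightarrow> ('a \<Rightarrow> 'b::metric_space) \<Rightarrow> ('a \<Rightarrow> 'b) \<Rightarrow> real" where
  "ky_fan M X Y = Inf {e. e > 0 \<and> measure M {s \<in> space M. dist (X s) (Y s) > e} \<le> e}"

definition rough_I_conv_prob ::
  "'a measure \<Rightarrow> nat set set \<Rightarrow> (nat \<Rightarrow> 'a \<Rightarrow> 'b::metric_space) \<Rightarrow> real \<Rightarrow> ('a \<Rightarrow> 'b) \<Rightarrow> bool" where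
  "rough_I_conv_prob M I X r Y \<longleftrightarrow>
     (\<forall>\<epsilon>>0. \<forall>\<delta>>0. {n. measure M {s \<in> space M. dist (X n s) (Y s) > r + \<epsilon>} > \<delta>} \<in> I)"

definition I_LIM_r :: "'a measure \<Rightarrow> nat set set \<Rightarrow> (nat \<Rightarrow> 'a \<Rightarrow> 'b::metric_space) \<Rightarrow> real \<Rightarrow> ('a \<Rightarrow> 'b) set" where
  "I_LIM_r M I X r = {Y \<in> rvs M. rough_I_conv_prob M I X r Y}"

definition theta_bar :: "'a measure \<Rightarrow> real \<Rightarrow> ('a \<Rightarrow> 'b::metric_space) \<Rightarrow> ('a \<Rightarrow> 'b) set" where
  "theta_bar M r X = {Y \<in> rvs M. measure M {s \<in> space M. dist (X s) (Y s) \<ge> r} = 0}"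

definition B_bar :: "'a measure \<Rightarrow> real \<Rightarrow> ('a \<Rightarrow> 'b::metric_space) \<Rightarrow> ('a \<Rightarrow> 'b) set" where
  "B_bar M r X = {Y \<in> rvs M. ky_fan M X Y \<le> r}"

end

theory Submission
  imports Defs
begin

lemma meas_dist_set:
  fixes A B :: "'a \<Rightarrow> 'b::{metric_space, second_countable_topology}"
  assumes "A \<in> borel_measurable M" "B \<in> borel_measurable M"
  shows "{s \<in> space M. dist (A s) (B s) > e} \<in> sets M"
    and "{s \<in> space M. dist (A s) (B s) \<ge> e} \<in> sets M"
  using assms by measurable

theorem theorem2p3:
  fixes M :: "'a measure" and I :: "nat set set"
    and X :: "nat \<Rightarrow> 'a \<Rightarrow> 'b::{metric_space, second_countable_topology}"
    and Xs :: "'a \<Rightarrow> 'b" and r :: real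
  assumes "prob_space M"
    and "ideal_on_nat I" and "UNIV \<notin> I"
    and "\<And>n. X n \<in> rvs M" and "Xs \<in> rvs M"
    and "rough_I_conv_prob M I X 0 Xs"
    and "r \<ge> 0"
  shows "theta_bar M r Xs \<subseteq> I_LIM_r M I X r \<and> I_LIM_r M I X r \<subseteq> B_bar M r Xs"
proof
  interpret prob_space M by fact
  have mX: "X n \<in> borel_measurable M" for n using assms(4) by (simp add: rvs_def)
  have mXs: "Xs \<in> borel_measurable M" using assms(5) by (simp add: rvs_def)
  have conv: "{n. measure M {s \<in> space M. dist (X n s) (Xs s) > e} > d} \<in> I" if "e > 0" "d > 0" for e d
    using assms(6) that unfolding rough_I_conv_prob_def by simp
  have sub: "B \<in> I" if "A \<in> I" "B \<subseteq> A" for A B using assms(2) that unfolding ideal_on_nat_def by blast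
  have un: "A \<union> B \<in> I" if "A \<in> I" "B \<in> I" for A B using assms(2) that unfolding ideal_on_nat_def by blast
  show "theta_bar M r Xs \<subseteq> I_LIM_r M I X r"
  proof
    fix Y assume "Y \<in> theta_bar M r Xs"
    hence mY: "Y \<in> borel_measurable M" and null: "measure M {s \<in> space M. dist (Xs s) (Y s) \<ge> r} = 0"
      by (auto simp: theta_bar_def rvs_def)
    have "rough_I_conv_prob M I X r Y"
      unfolding rough_I_conv_prob_def
    proof (intro allI impI)
      fix e d :: real assume e: "e > 0" and d: "d > 0"
      have "measure M {s \<in> space M. dist (X n s) (Y s) > r + e} \<le> measure M {s \<in> space M. dist (X n s) (Xs s) > e}" for n
      proof -
        let ?A = "{s \<in> space M. dist (X n s) (Xs s) > e}"
        let ?N = "{s \<in> space M. dist (Xs s) (Y s) \<ge> r}"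
        have "{s \<in> space M. dist (X n s) (Y s) > r + e} \<subseteq> ?A \<union> ?N"
        proof safe
          fix s assume "s \<in> space M" "r + e < dist (X n s) (Y s)" "\<not> r \<le> dist (Xs s) (Y s)"
          moreover have "dist (X n s) (Y s) \<le> dist (X n s) (Xs s) + dist (Xs s) (Y s)" by (rule dist_triangle)
          ultimately show "e < dist (X n s) (Xs s)" by linarith
        qed
        hence "measure M {s \<in> space M. dist (X n s) (Y s) > r + e} \<le> measure M (?A \<union> ?N)"
          by (intro finite_measure_mono sets.Un meas_dist_set mX mXs mY)
        also have "\<dots> \<le> measure M ?A + measure M ?N"
          by (intro measure_Un_le meas_dist_set mX mXs mY)
        finally show ?thesis using null by simp
      qed
      hence "{n. measure M {s \<in> space M. dist (X n s) (Y s) > r + e} > d}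
          \<subseteq> {n. measure M {s \<in> space M. dist (X n s) (Xs s) > e} > d}"
        by (auto intro: less_le_trans)
      thus "{n. measure M {s \<in> space M. dist (X n s) (Y s) > r + e} > d} \<in> I"
        using sub conv e d by blast
    qed
    thus "Y \<in> I_LIM_r M I X r" using mY by (simp add: I_LIM_r_def rvs_def)
  qed
  show "I_LIM_r M I X r \<subseteq> B_bar M r Xs"
  proof
    fix Y assume "Y \<in> I_LIM_r M I X r"
    hence mY: "Y \<in> borel_measurable M" and rc: "rough_I_conv_prob M I X r Y"
      by (auto simp: I_LIM_r_def rvs_def)
    let ?S = "{e. e > 0 \<and> measure M {s \<in> space M. dist (Xs s) (Y s) > e} \<le> e}"
    have zero: "measure M {s \<in> space M. dist (Xs s) (Y s) > r + h} = 0" if h: "h > 0" for h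
    proof -
      have bound: "measure M {s \<in> space M. dist (Xs s) (Y s) > r + h} \<le> 2 * d" if d: "d > 0" for d
      proof -
        let ?P = "{n. measure M {s \<in> space M. dist (X n s) (Xs s) > h/2} > d}"
        let ?Q = "{n. measure M {s \<in> space M. dist (X n s) (Y s) > r + h/2} > d}"
        have "?P \<in> I" using conv[of "h/2" d] h d by (meson half_gt_zero)
        moreover have "?Q \<in> I" using rc h d unfolding rough_I_conv_prob_def by simp
        ultimately have "?P \<union> ?Q \<in> I" by (rule un)
        hence "?P \<union> ?Q \<noteq> UNIV" using assms(3) by auto
        then obtain n where "n \<notin> ?P \<union> ?Q" by blast
        hence n1: "measure M {s \<in> space M. dist (X n s) (Xs s) > h/2} \<le> d"
          and n2: "measure M {s \<in> space M. dist (X n s) (Y s) > r + h/2} \<le> d" by simp_all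
        let ?A = "{s \<in> space M. dist (X n s) (Xs s) > h/2}"
        let ?B = "{s \<in> space M. dist (X n s) (Y s) > r + h/2}"
        have "{s \<in> space M. dist (Xs s) (Y s) > r + h} \<subseteq> ?A \<union> ?B"
        proof safe
          fix s assume "s \<in> space M" "r + h < dist (Xs s) (Y s)" "\<not> r + h/2 < dist (X n s) (Y s)"
          moreover have "dist (Xs s) (Y s) \<le> dist (X n s) (Xs s) + dist (X n s) (Y s)" by (rule dist_triangle3)
          ultimately show "h/2 < dist (X n s) (Xs s)" by linarith
        qed
        hence "measure M {s \<in> space M. dist (Xs s) (Y s) > r + h} \<le> measure M (?A \<union> ?B)"
          by (intro finite_measure_mono sets.Un meas_dist_set mX mXs mY)
        also have "\<dots> \<le> measure M ?A + measure M ?B"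
          by (intro measure_Un_le meas_dist_set mX mXs mY)
        finally show ?thesis using n1 n2 by simp
      qed
      have "measure M {s \<in> space M. dist (Xs s) (Y s) > r + h} \<le> 0"
      proof (rule field_le_epsilon)
        fix t :: real assume "t > 0"
        thus "measure M {s \<in> space M. dist (Xs s) (Y s) > r + h} \<le> 0 + t"
          using bound[of "t/2"] by simp
      qed
      thus ?thesis using measure_nonneg[of M] by (meson antisym)
    qed
    have "ky_fan M Xs Y \<le> r"
    proof (rule field_le_epsilon)
      fix h :: real assume h: "h > 0"
      have "r + h \<in> ?S" using zero[OF h] h assms(7) by simp
      moreover have "bdd_below ?S" by (rule bdd_belowI[of _ 0]) auto
      ultimately show "ky_fan M Xs Y \<le> r + h" unfolding ky_fan_def by (rule cInf_lower)
    qed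
    thus "Y \<in> B_bar M r Xs" using mY by (simp add: B_bar_def rvs_def)
  qed
qed

end
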